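(* Let $n\ge1$, $1\le i\le n$, and let $\mathfrak{g}$ be of type $B_n$. Then \[ \widetilde{\operatorname{ps}}(\widetilde\omega_i)=\begin{bmatrix}2n+1\\ i\end{bmatrix}_q. \]
   Context: For type $B_n$: $\widetilde\omega_i=\omega_i=\epsilon_1+\cdots+\epsilon_i$ for $1\le i<n$ and $\widetilde\omega_n=2\omega_n=\epsilon_1+\cdots+\epsilon_n$. The principal specialization $\operatorname{ps}(\lambda)$ is $\operatorname{ch}V(\lambda)$ with $x_j=q^j$ substituted, and $\widetilde{\operatorname{ps}}(\lambda)=q^{-\eta}\operatorname{ps}(\lambda)$ with $\eta$ the lowest exponent of $q$ in $\operatorname{ps}(\lambda)$. $\begin{bmatrix}a\\ b\end{bmatrix}_q$ is the Gaussian binomial coefficient. *)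

theory Defs
  imports "HOL-Computational_Algebra.Formal_Laurent_Series" "HOL-Combinatorics.Permutations"
begin

text \<open>Weights are given by their coordinates w.r.t. eps_1,...,eps_n,
  as functions nat => rat (only the coordinates 1..n are relevant).
  Formal variables x_j = e^(eps_j); the principal specialization substitutes x_j := q^j,
  so e^mu becomes q^(sum_j j * mu_j).\<close>

text \<open>Weyl group of B_n: signed permutations w = (sigma, s) acting by
  (w mu)_j = s_j * mu_(sigma^-1 j); its sign is det w = sign(sigma) * prod s_j.\<close>
definition weylB :: "nat \<Rightarrow> ((nat \<Rightarrow> nat) \<times> (nat \<Rightarrow> int)) set" where
  "weylB n = {(\<sigma>, s). \<sigma> permutes {1..n} \<and> (\<forall>j\<in>{1..n}. s j \<in> {1, -1}) \<and> (\<forall>j. j \<notin> {1..n} \<longrightarrow> s j = 1)}"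

definition wsignB :: "nat \<Rightarrow> (nat \<Rightarrow> nat) \<times> (nat \<Rightarrow> int) \<Rightarrow> int" where
  "wsignB n w = sign (fst w) * (\<Prod>j\<in>{1..n}. snd w j)"

definition wactB :: "(nat \<Rightarrow> nat) \<times> (nat \<Rightarrow> int) \<Rightarrow> (nat \<Rightarrow> rat) \<Rightarrow> (nat \<Rightarrow> rat)" where
  "wactB w \<mu> = (\<lambda>j. of_int (snd w j) * \<mu> (inv (fst w) j))"

text \<open>rho = half-sum of positive roots of B_n = (n - 1/2, n - 3/2, ..., 1/2).\<close>
definition rhoB :: "nat \<Rightarrow> nat \<Rightarrow> rat" where
  "rhoB n = (\<lambda>j. if 1 \<le> j \<and> j \<le> n then of_nat n - of_nat j + 1/2 else 0)"

definition ps_exp :: "nat \<Rightarrow> (nat \<Rightarrow> rat) \<Rightarrow> int" where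
  "ps_exp n \<mu> = \<lfloor>\<Sum>j\<in>{1..n}. of_nat j * \<mu> j\<rfloor>"

text \<open>Specialized Weyl numerator sum_w sgn(w) e^(w(lambda+rho) - rho)
  (the factor e^(-rho) makes all exponents integral).\<close>
definition weyl_numB :: "nat \<Rightarrow> (nat \<Rightarrow> rat) \<Rightarrow> rat fls" where
  "weyl_numB n lam = (\<Sum>w\<in>weylB n. of_int (wsignB n w) *
       fls_X_intpow (ps_exp n (\<lambda>j. wactB w (\<lambda>k. lam k + rhoB n k) j - rhoB n j)))"

text \<open>Character of V(lambda) via the Weyl character formula, specialized x_j := q^j.\<close>
definition psB :: "nat \<Rightarrow> (nat \<Rightarrow> rat) \<Rightarrow> rat fls" where
  "psB n lam = weyl_numB n lam / weyl_numB n (\<lambda>_. 0)"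

definition ps_tildeB :: "nat \<Rightarrow> (nat \<Rightarrow> rat) \<Rightarrow> rat fls" where
  "ps_tildeB n lam = fls_shift (fls_subdegree (psB n lam)) (psB n lam)"

definition omega_tildeB :: "nat \<Rightarrow> nat \<Rightarrow> rat" where
  "omega_tildeB i = (\<lambda>j. if 1 \<le> j \<and> j \<le> i then 1 else 0)"

fun qbinom :: "nat \<Rightarrow> nat \<Rightarrow> rat fls" where
  "qbinom a 0 = 1"
| "qbinom 0 (Suc b) = 0"
| "qbinom (Suc a) (Suc b) = qbinom a b + fls_X ^ (Suc b) * qbinom a (Suc b)"

end

theory Submission
  imports Defs "Jordan_Normal_Form.Determinant"
begin

lemma prod_list_map_one: "prod_list (map (\<lambda>_. 1) xs) = (1::'a::monoid_mult)"
  by (induction xs) auto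

lemma det_rowscale:
  fixes a :: "nat \<Rightarrow> 'a::comm_ring_1"
  shows "det (mat n n (\<lambda>(i,j). a i * B i j)) = prod a {0..<n} * det (mat n n (\<lambda>(i,j). B i j))"
proof -
  have "det (mat n n (\<lambda>(i,j). a i * B i j)) =
     (\<Sum>p\<in>{p. p permutes {0..<n}}. signof p * (\<Prod>i=0..<n. a i * B i (p i)))"
    by (subst det_def'[of _ n]) (auto intro!: sum.cong prod.cong simp: permutes_in_image)
  also have "\<dots> = (\<Sum>p\<in>{p. p permutes {0..<n}}. prod a {0..<n} * (signof p * (\<Prod>i=0..<n. B i (p i))))"
    by (simp add: prod.distrib mult_ac)
  also have "\<dots> = prod a {0..<n} * det (mat n n (\<lambda>(i,j). B i j))"
    by (subst det_def'[of _ n]) (auto simp: sum_distrib_left intro!: sum.cong prod.cong arg_cong2[where f="(*)"] simp: permutes_in_image)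
  finally show ?thesis .
qed

lemma vandermonde:
  fixes c :: "nat \<Rightarrow> 'a::idom"
  shows "det (mat n n (\<lambda>(k,j). c k ^ j)) = (\<Prod>l<n. \<Prod>k<l. (c l - c k))"
proof (induction n arbitrary: c)
  case 0
  then show ?case by (simp add: det_dim_zero)
next
  case (Suc n)
  define V where "V = mat (Suc n) (Suc n) (\<lambda>(k,j). c k ^ j)"
  define E :: "'a mat" where "E = mat (Suc n) (Suc n) (\<lambda>(i,j). if i = j then 1 else if Suc i = j then - c 0 else 0)"
  define A4 where "A4 = mat n n (\<lambda>(k,j). (c (Suc k) - c 0) * c (Suc k) ^ j)"
  define B where "B = four_block_mat (mat 1 1 (\<lambda>_. 1)) (0\<^sub>m 1 n) (mat n 1 (\<lambda>_. 1)) A4"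
  have V: "V \<in> carrier_mat (Suc n) (Suc n)" and E: "E \<in> carrier_mat (Suc n) (Suc n)"
    by (auto simp: V_def E_def)
  have ut: "upper_triangular E" unfolding E_def upper_triangular_def by auto
  have "det E = prod_list (diag_mat E)" by (rule det_upper_triangular[OF ut E])
  also have "diag_mat E = map (\<lambda>_. 1) [0..<Suc n]"
    unfolding diag_mat_def by (rule map_cong) (auto simp: E_def)
  finally have dE: "det E = 1" by (simp only: prod_list_map_one)
  have VE: "V * E = B"
  proof (rule eq_matI)
    fix i j assume i: "i < dim_row B" and j: "j < dim_col B"
    hence i': "i < Suc n" and j': "j < Suc n" by (auto simp: B_def A4_def)
    have "(V * E) $$ (i,j) = (\<Sum>k\<in>{0..<Suc n}. c i ^ k * (if k = j then 1 else if Suc k = j then - c 0 else 0))"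
      using i' j' by (simp add: V_def E_def scalar_prod_def)
    also have "\<dots> = (\<Sum>k\<in>{0..<Suc n}. (if k = j then c i ^ k else 0) + (if Suc k = j then - c 0 * c i ^ k else 0))"
      by (intro sum.cong) auto
    also have "\<dots> = c i ^ j + (if j = 0 then 0 else - c 0 * c i ^ (j - 1))"
      using j' by (cases j) (auto simp: sum.distrib)
    also have "\<dots> = B $$ (i,j)"
      using i' j' by (cases i; cases j) (auto simp: B_def A4_def algebra_simps)
    finally show "(V * E) $$ (i,j) = B $$ (i,j)" .
  qed (auto simp: V_def B_def A4_def E_def)
  have "det (V * E) = det V * det E" by (rule det_mult[OF V E])
  hence "det V = det B" using VE dE by simp
  also have "det B = det (mat 1 1 (\<lambda>_. 1::'a)) * det A4"
    unfolding B_def by (rule det_four_block_mat_upper_right_zero) (auto simp: A4_def)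
  also have "det (mat 1 1 (\<lambda>_. 1::'a)) = 1"
    by (subst det_single) auto
  also have "det A4 = prod (\<lambda>k. c (Suc k) - c 0) {0..<n} * det (mat n n (\<lambda>(k,j). c (Suc k) ^ j))"
    unfolding A4_def by (rule det_rowscale)
  also have "det (mat n n (\<lambda>(k,j). c (Suc k) ^ j)) = (\<Prod>l<n. \<Prod>k<l. (c (Suc l) - c (Suc k)))"
    using Suc.IH[of "c \<circ> Suc"] by simp
  finally have "det V = (\<Prod>k<n. c (Suc k) - c 0) * (\<Prod>l<n. \<Prod>k<l. (c (Suc l) - c (Suc k)))"
    by (simp add: atLeast0LessThan)
  also have "\<dots> = (\<Prod>l<n. (c (Suc l) - c 0) * (\<Prod>k<l. c (Suc l) - c (Suc k)))"
    by (simp add: prod.distrib)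
  also have "\<dots> = (\<Prod>l<n. \<Prod>k<Suc l. (c (Suc l) - c k))"
    by (rule prod.cong[OF refl]) (simp only: prod.lessThan_Suc_shift)
  also have "\<dots> = (\<Prod>l<Suc n. \<Prod>k<l. (c l - c k))"
    by (simp only: prod.lessThan_Suc_shift) simp
  finally show ?case by (simp add: V_def)
qed

fun chebU :: "nat \<Rightarrow> 'a::comm_ring_1 poly" where
  "chebU 0 = 1"
| "chebU (Suc 0) = [:0,1:]"
| "chebU (Suc (Suc m)) = [:0,1:] * chebU (Suc m) - chebU m"

lemma chebU_deg: "degree (chebU m :: 'a::idom poly) = m \<and> coeff (chebU m :: 'a poly) m = 1"
proof (induction m rule: chebU.induct)
  case (3 m)
  let ?p = "[:0,1:] * (chebU (Suc m) :: 'a poly)"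
  have c1: "coeff ?p (Suc (Suc m)) = 1" using 3 by (simp add: coeff_pCons)
  have c2: "coeff (chebU m :: 'a poly) (Suc (Suc m)) = 0" using 3 by (simp add: coeff_eq_0)
  have "?p = pCons 0 (chebU (Suc m))" by simp
  hence dp: "degree ?p \<le> Suc (Suc m)" using 3
    by (metis degree_pCons_le)
  have "degree (?p - chebU m) \<le> Suc (Suc m)"
    using dp 3 by (intro order_trans[OF degree_diff_le]) auto
  moreover have "coeff (?p - chebU m) (Suc (Suc m)) = 1" using c1 c2 by simp
  ultimately show ?case by (simp add: le_antisym le_degree)
qed (auto)

lemma chebU_eval:
  fixes x :: "'a::field"
  assumes "x \<noteq> 0"
  shows "(x - inverse x) * poly (chebU m) (x + inverse x) = x ^ Suc m - inverse x ^ Suc m"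
proof (induction m rule: chebU.induct)
  case 1 then show ?case by simp
next
  case 2 then show ?case using assms by (simp add: field_simps power2_eq_square)
next
  case (3 m)
  have "(x - inverse x) * poly (chebU (Suc (Suc m))) (x + inverse x) =
     (x + inverse x) * ((x - inverse x) * poly (chebU (Suc m)) (x + inverse x)) - (x - inverse x) * poly (chebU m) (x + inverse x)"
    by (simp add: algebra_simps)
  also have "\<dots> = (x + inverse x) * (x ^ Suc (Suc m) - inverse x ^ Suc (Suc m)) - (x ^ Suc m - inverse x ^ Suc m)"
    using 3 by simp
  also have "\<dots> = x * x ^ Suc (Suc m) - inverse x * inverse x ^ Suc (Suc m)"
  proof -
    have xi: "x * inverse x = 1" using assms by simp
    have a: "x * inverse x ^ Suc (Suc m) = inverse x ^ Suc m"
      by (simp only: power_Suc[of "inverse x" "Suc m"] mult.assoc[symmetric] xi mult_1_left)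
    have b: "inverse x * x ^ Suc (Suc m) = x ^ Suc m"
      by (simp only: power_Suc[of x "Suc m"] mult.assoc[symmetric] xi mult.commute[of "inverse x" x] mult_1_left)
    have "(x + inverse x) * (x ^ Suc (Suc m) - inverse x ^ Suc (Suc m)) =
      x * x ^ Suc (Suc m) - x * inverse x ^ Suc (Suc m) + inverse x * x ^ Suc (Suc m) - inverse x * inverse x ^ Suc (Suc m)"
      by (simp add: algebra_simps del: power_Suc)
    thus ?thesis by (simp only: a b) (simp add: algebra_simps del: power_Suc)
  qed
  also have "\<dots> = x ^ Suc (Suc (Suc m)) - inverse x ^ Suc (Suc (Suc m))"
    by (simp only: power_Suc)
  finally show ?case .
qed

lemma alt_prod:
  fixes x :: "nat \<Rightarrow> 'a::field"
  assumes x: "\<And>k. k < n \<Longrightarrow> x k \<noteq> 0"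
  shows "det (mat n n (\<lambda>(k,m). x k ^ Suc m - inverse (x k) ^ Suc m)) =
    (\<Prod>k<n. x k - inverse (x k)) * (\<Prod>l<n. \<Prod>k<l. (x l + inverse (x l)) - (x k + inverse (x k)))"
proof -
  define y where "y k = x k + inverse (x k)" for k
  define V where "V = mat n n (\<lambda>(k,j). y k ^ j)"
  define T :: "'a mat" where "T = mat n n (\<lambda>(j,m). coeff (chebU m) j)"
  have V: "V \<in> carrier_mat n n" and T: "T \<in> carrier_mat n n" by (auto simp: V_def T_def)
  have "mat n n (\<lambda>(k,m). x k ^ Suc m - inverse (x k) ^ Suc m) =
        mat n n (\<lambda>(k,m). (x k - inverse (x k)) * poly (chebU m) (y k))"
    by (rule eq_matI) (auto simp: chebU_eval x y_def)
  hence "det (mat n n (\<lambda>(k,m). x k ^ Suc m - inverse (x k) ^ Suc m)) =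
     prod (\<lambda>k. x k - inverse (x k)) {0..<n} * det (mat n n (\<lambda>(k,m). poly (chebU m) (y k)))"
    using det_rowscale[where a="\<lambda>k. x k - inverse (x k)" and n=n and B="\<lambda>k m. poly (chebU m) (y k)"] by simp
  also have "mat n n (\<lambda>(k,m). poly (chebU m) (y k)) = V * T"
  proof (rule eq_matI)
    fix i j assume "i < dim_row (V * T)" "j < dim_col (V * T)"
    hence i: "i < n" and j: "j < n" by (auto simp: V_def T_def)
    have dg: "degree (chebU j :: 'a poly) = j" using chebU_deg by blast
    have "(V * T) $$ (i,j) = (\<Sum>k\<in>{0..<n}. y i ^ k * coeff (chebU j) k)"
      using i j by (simp add: V_def T_def scalar_prod_def)
    also have "\<dots> = (\<Sum>k\<le>degree (chebU j :: 'a poly). coeff (chebU j) k * y i ^ k)"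
      using j dg by (intro sum.mono_neutral_cong_right) (auto simp: coeff_eq_0 mult.commute)
    also have "\<dots> = poly (chebU j) (y i)" by (simp add: poly_altdef)
    finally show "mat n n (\<lambda>(k,m). poly (chebU m) (y k)) $$ (i,j) = (V * T) $$ (i,j)"
      using i j by simp
  qed (auto simp: V_def T_def)
  also have "det (V * T) = det V * det T" by (rule det_mult[OF V T])
  also have "det T = 1"
  proof -
    have ut: "upper_triangular T" unfolding T_def upper_triangular_def
    proof (intro allI impI)
      fix i j assume "i < dim_row (mat n n (\<lambda>(j, m). coeff (chebU m :: 'a poly) j))" "j < i"
      hence "i < n" "j < i" by auto
      thus "mat n n (\<lambda>(j, m). coeff (chebU m :: 'a poly) j) $$ (i, j) = 0"
        using chebU_deg[of j, where 'a='a] by (auto simp: coeff_eq_0)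
    qed
    have "det T = prod_list (diag_mat T)" by (rule det_upper_triangular[OF ut T])
    also have "diag_mat T = map (\<lambda>_. 1) [0..<n]"
      unfolding diag_mat_def by (rule map_cong) (auto simp: T_def chebU_deg)
    finally show ?thesis by (simp only: prod_list_map_one)
  qed
  also have "det V = (\<Prod>l<n. \<Prod>k<l. (y l - y k))" unfolding V_def by (rule vandermonde)
  finally show ?thesis by (simp add: y_def atLeast0LessThan)
qed

lemma sum_perm_inv:
  assumes "finite A"
  shows "(\<Sum>sg\<in>{sg. sg permutes A}. f sg) = (\<Sum>sg\<in>{sg. sg permutes A}. f (inv_into UNIV sg))"
  by (rule sum.reindex_bij_witness[where i="inv_into UNIV" and j="inv_into UNIV"])
     (auto simp: permutes_inv permutes_inv_inv)

definition shup :: "nat \<Rightarrow> (nat \<Rightarrow> nat) \<Rightarrow> nat \<Rightarrow> nat" where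
  "shup n p = (\<lambda>x. if x \<in> {1..n} then Suc (p (x - 1)) else x)"
definition shdn :: "nat \<Rightarrow> (nat \<Rightarrow> nat) \<Rightarrow> nat \<Rightarrow> nat" where
  "shdn n t = (\<lambda>x. if x \<in> {0..<n} then t (Suc x) - 1 else x)"

lemma shup_perm:
  assumes p: "p permutes {0..<n}"
  shows "shup n p permutes {1..n}" "sign (shup n p) = sign p"
proof -
  have H: "permutes_bij_finite p {0..<n} {1..n} Suc (\<lambda>x. x - 1)"
    unfolding permutes_bij_finite_def permutes_bij_finite_axioms_def permutes_bij_def
    by (auto simp: p bij_betw_def atLeastLessThanSuc_atLeastAtMost image_Suc_atLeastLessThan[symmetric])
  show "shup n p permutes {1..n}"
    using permutes_bij.permutes_p'[OF permutes_bij_finite.axioms(1)[OF H]] by (simp add: shup_def)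
  show "sign (shup n p) = sign p" using permutes_bij_finite.sign_p'[OF H] by (simp add: shup_def)
qed

lemma shdn_perm:
  assumes t: "t permutes {1..n}"
  shows "shdn n t permutes {0..<n}"
proof -
  have H: "permutes_bij t {1..n} {0..<n} (\<lambda>x. x - 1) Suc"
    unfolding permutes_bij_def using t
    by (auto intro!: bij_betw_byWitness[where f'=Suc])
  show ?thesis using permutes_bij.permutes_p'[OF H] by (simp add: shdn_def)
qed

lemma shup_shdn: "t permutes {1..n} \<Longrightarrow> shup n (shdn n t) = t"
proof -
  assume t: "t permutes {1..n}"
  have tin: "j \<in> {1..n} \<Longrightarrow> t j \<in> {1..n}" for j using t permutes_in_image by fastforce
  show ?thesis
  proof
    fix x show "shup n (shdn n t) x = t x"
    proof (cases "x \<in> {1..n}")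
      case True
      then have "Suc (x - 1) = x" "x - 1 \<in> {0..<n}" by auto
      moreover have "t x \<ge> 1" using tin[OF True] by simp
      ultimately show ?thesis using True by (simp add: shup_def shdn_def)
    next
      case False then show ?thesis using t by (auto simp: permutes_not_in shup_def)
    qed
  qed
qed

lemma shdn_shup: "p permutes {0..<n} \<Longrightarrow> shdn n (shup n p) = p"
proof
  fix x assume p: "p permutes {0..<n}"
  show "shdn n (shup n p) x = p x"
    using p by (cases "x < n") (auto simp: permutes_not_in shup_def shdn_def)
qed

lemma perm_shift_term:
  fixes G :: "nat \<Rightarrow> nat \<Rightarrow> 'a::comm_ring_1"
  assumes p: "p permutes {0..<n}"
  shows "of_int (sign (shup n p)) * (\<Prod>j\<in>{1..n}. G j (shup n p j)) =
      of_int (sign p) * (\<Prod>j\<in>{0..<n}. G (Suc j) (Suc (p j)))"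
proof -
  have "(\<Prod>j\<in>{1..n}. G j (shup n p j)) = (\<Prod>j\<in>Suc ` {0..<n}. G j (Suc (p (j - 1))))"
    by (intro prod.cong) (auto simp: atLeastLessThanSuc_atLeastAtMost shup_def)
  also have "\<dots> = (\<Prod>j\<in>{0..<n}. G (Suc j) (Suc (p j)))"
    by (subst prod.reindex) auto
  finally show ?thesis using shup_perm[OF p] by simp
qed

lemma perm_shift:
  fixes G :: "nat \<Rightarrow> nat \<Rightarrow> 'a::comm_ring_1"
  shows "(\<Sum>t\<in>{t. t permutes {1..n}}. of_int (sign t) * (\<Prod>j\<in>{1..n}. G j (t j))) =
         (\<Sum>p\<in>{p. p permutes {0..<n}}. of_int (sign p) * (\<Prod>j\<in>{0..<n}. G (Suc j) (Suc (p j))))"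
proof (rule sum.reindex_bij_witness[where i="shup n" and j="shdn n"])
  fix p assume "p \<in> {p. p permutes {0..<n}}"
  hence p: "p permutes {0..<n}" by simp
  show "shup n p \<in> {t. t permutes {1..n}}" using shup_perm[OF p] by simp
  show "shdn n (shup n p) = p" using shdn_shup[OF p] .
next
  fix t assume "t \<in> {t. t permutes {1..n}}"
  hence t: "t permutes {1..n}" by simp
  show "shdn n t \<in> {p. p permutes {0..<n}}" using shdn_perm[OF t] by simp
  show "shup n (shdn n t) = t" using shup_shdn[OF t] .
  show "of_int (sign (shdn n t)) * (\<Prod>j\<in>{0..<n}. G (Suc j) (Suc (shdn n t j))) =
      of_int (sign t) * (\<Prod>j\<in>{1..n}. G j (t j))"
    using perm_shift_term[OF shdn_perm[OF t], of G] shup_shdn[OF t] by simp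
qed

definition Phi :: "rat fls \<Rightarrow> rat fls" where "Phi f = fls_compose_power f 2"

lemma Phi_add: "Phi (f + g) = Phi f + Phi g" by (simp add: Phi_def)
lemma Phi_diff: "Phi (f - g) = Phi f - Phi g" by (simp add: Phi_def)
lemma Phi_mult: "Phi (f * g) = Phi f * Phi g" by (simp add: Phi_def)
lemma Phi_XI: "Phi (fls_X_intpow e) = fls_X_intpow (2 * e)" by (simp add: Phi_def)
lemma Phi_of_int: "Phi (of_int c) = of_int c" by (simp add: Phi_def fls_of_int)
lemma Phi_1: "Phi 1 = 1" by (simp add: Phi_def)
lemma Phi_0: "Phi 0 = 0" by (simp add: Phi_def)

lemma Phi_sum: "Phi (sum f A) = (\<Sum>a\<in>A. Phi (f a))"
  by (induction A rule: infinite_finite_induct) (auto simp: Phi_add Phi_0)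

lemma Phi_prod: "Phi (prod f A) = (\<Prod>a\<in>A. Phi (f a))"
  by (induction A rule: infinite_finite_induct) (auto simp: Phi_mult Phi_1)

lemma Phi_inj: assumes "Phi f = Phi g" shows "f = g"
proof (rule fls_eqI)
  fix m
  have "fls_nth (Phi f) (2 * m) = fls_nth f m" unfolding Phi_def
    by (subst fls_nth_compose_power) auto
  moreover have "fls_nth (Phi g) (2 * m) = fls_nth g m" unfolding Phi_def
    by (subst fls_nth_compose_power) auto
  ultimately show "fls_nth f m = fls_nth g m" using assms by simp
qed

lemma XI_sum: "fls_X_intpow (sum f A) = (\<Prod>a\<in>A. (fls_X_intpow (f a) :: 'a::field fls))"
proof (induction A rule: infinite_finite_induct)
  case (insert x F)
  have "(fls_X_intpow (sum f (insert x F)) :: 'a fls) = fls_X_intpow (f x + sum f F)" using insert by simp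
  also have "\<dots> = fls_X_intpow (f x) * fls_X_intpow (sum f F)"
    by (rule fls_X_intpow_times_fls_X_intpow[symmetric])
  finally show ?case using insert by simp
qed auto

definition SG :: "nat \<Rightarrow> (nat \<Rightarrow> int) set" where
  "SG n = {s. (\<forall>j\<in>{1..n}. s j \<in> {1, -1}) \<and> (\<forall>j. j \<notin> {1..n} \<longrightarrow> s j = 1)}"

lemma weylB_eq: "weylB n = {sg. sg permutes {1..n}} \<times> SG n"
  by (auto simp: weylB_def SG_def)

lemma sum_SG:
  fixes g :: "nat \<Rightarrow> int \<Rightarrow> 'a::comm_ring_1"
  shows "(\<Sum>s\<in>SG n. \<Prod>j\<in>{1..n}. g j (s j)) = (\<Prod>j\<in>{1..n}. g j 1 + g j (-1))"
proof -
  have "(\<Prod>j\<in>{1..n}. g j 1 + g j (-1)) = (\<Prod>j\<in>{1..n}. \<Sum>e\<in>{1,-1}. g j e)" by simp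
  also have "\<dots> = (\<Sum>h\<in>PiE {1..n} (\<lambda>_. {1,-1}). \<Prod>j\<in>{1..n}. g j (h j))"
    by (rule prod_sum_PiE) auto
  also have "\<dots> = (\<Sum>s\<in>SG n. \<Prod>j\<in>{1..n}. g j (s j))"
  proof (rule sum.reindex_bij_witness[where i="\<lambda>s. restrict s {1..n}" and j="\<lambda>h j. if j \<in> {1..n} then h j else 1"])
    fix a assume a: "a \<in> PiE {1..n} (\<lambda>_. {1,-1::int})"
    show "restrict (\<lambda>j. if j \<in> {1..n} then a j else 1) {1..n} = a"
      using a by (auto simp: PiE_def extensional_def fun_eq_iff)
    show "(\<lambda>j. if j \<in> {1..n} then a j else 1) \<in> SG n"
      using a by (auto simp: SG_def PiE_def)
    show "(\<Prod>j\<in>{1..n}. g j (if j \<in> {1..n} then a j else 1)) = (\<Prod>j\<in>{1..n}. g j (a j))"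
      by (rule prod.cong) auto
  next
    fix b assume b: "b \<in> SG n"
    show "(\<lambda>j. if j \<in> {1..n} then restrict b {1..n} j else 1) = b"
      using b by (auto simp: SG_def fun_eq_iff)
    show "restrict b {1..n} \<in> PiE {1..n} (\<lambda>_. {1,-1})"
      using b by (auto simp: SG_def)
  qed
  finally show ?thesis ..
qed

definition RR :: "nat \<Rightarrow> int" where
  "RR n = (\<Sum>j\<in>{1..n}. int j * (2 * int n - 2 * int j + 1))"

lemma ps_exp_val:
  fixes L :: "nat \<Rightarrow> int" and lam :: "nat \<Rightarrow> rat"
  assumes lamL: "\<And>k. k \<in> {1..n} \<Longrightarrow> lam k = of_int (L k)"
  assumes sg: "sg permutes {1..n}" and s: "s \<in> SG n"
  defines "b \<equiv> \<lambda>k. 2 * L k + 2 * int n - 2 * int k + 1"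
  shows "2 * ps_exp n (\<lambda>j. wactB (sg,s) (\<lambda>k. lam k + rhoB n k) j - rhoB n j) =
     (\<Sum>j\<in>{1..n}. int j * s j * b (inv_into UNIV sg j)) - RR n"
proof -
  have inv_in: "inv_into UNIV sg j \<in> {1..n}" if "j \<in> {1..n}" for j
    using permutes_in_image[OF permutes_inv[OF sg]] that by blast
  have sj: "s j = 1 \<or> s j = -1" if "j \<in> {1..n}" for j using s that by (auto simp: SG_def)
  define h where "h j = (s j * b (inv_into UNIV sg j) - (2 * int n - 2 * int j + 1)) div 2" for j
  have h2: "2 * h j = s j * b (inv_into UNIV sg j) - (2 * int n - 2 * int j + 1)" if "j \<in> {1..n}" for j
  proof -
    have ob: "odd (b k)" for k unfolding b_def by presburger
    have "odd (s j * b (inv_into UNIV sg j))" using sj[OF that] ob by auto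
    moreover have "odd (2 * int n - 2 * int j + 1)" by presburger
    ultimately have "even (s j * b (inv_into UNIV sg j) - (2 * int n - 2 * int j + 1))" by simp
    thus ?thesis unfolding h_def by (rule even_two_times_div_two)
  qed
  have trm: "of_nat j * (wactB (sg,s) (\<lambda>k. lam k + rhoB n k) j - rhoB n j) = (of_int (int j * h j) :: rat)"
    if j: "j \<in> {1..n}" for j
  proof -
    let ?k = "inv_into UNIV sg j"
    have k: "?k \<in> {1..n}" by (rule inv_in[OF j])
    have "(of_int (2 * h j) :: rat) = of_int (s j * b ?k - (2 * int n - 2 * int j + 1))"
      using h2[OF j] by simp
    hence e: "(of_int (h j) :: rat) = (of_int (s j) * (2 * of_int (L ?k) + 2 * of_nat n - 2 * of_nat ?k + 1) - (2 * of_nat n - 2 * of_nat j + 1)) / 2"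
      by (simp add: b_def field_simps)
    show ?thesis using k j
      by (simp add: wactB_def rhoB_def lamL e field_simps)
  qed
  have "ps_exp n (\<lambda>j. wactB (sg,s) (\<lambda>k. lam k + rhoB n k) j - rhoB n j) =
        \<lfloor>\<Sum>j\<in>{1..n}. (of_int (int j * h j) :: rat)\<rfloor>"
    unfolding ps_exp_def by (rule arg_cong[where f=floor], rule sum.cong) (auto simp: trm)
  also have "\<dots> = (\<Sum>j\<in>{1..n}. int j * h j)"
    by (simp only: of_int_sum[symmetric] floor_of_int)
  finally have "2 * ps_exp n (\<lambda>j. wactB (sg,s) (\<lambda>k. lam k + rhoB n k) j - rhoB n j) =
       (\<Sum>j\<in>{1..n}. int j * (2 * h j))"
    by (simp add: sum_distrib_left mult_ac)
  also have "\<dots> = (\<Sum>j\<in>{1..n}. int j * s j * b (inv_into UNIV sg j) - int j * (2 * int n - 2 * int j + 1))"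
    by (rule sum.cong[OF refl]) (simp add: h2 right_diff_distrib mult.assoc)
  also have "\<dots> = (\<Sum>j\<in>{1..n}. int j * s j * b (inv_into UNIV sg j)) - RR n"
    by (simp add: sum_subtractf RR_def)
  finally show ?thesis .
qed

lemma weyl_to_det:
  fixes L :: "nat \<Rightarrow> int" and lam :: "nat \<Rightarrow> rat"
  assumes lamL: "\<And>k. k \<in> {1..n} \<Longrightarrow> lam k = of_int (L k)"
  defines "b \<equiv> \<lambda>k. 2 * L k + 2 * int n - 2 * int k + 1"
  shows "Phi (weyl_numB n lam) = fls_X_intpow (- RR n) *
     det (mat n n (\<lambda>(j,k). fls_X_intpow (int (Suc j) * b (Suc k)) - fls_X_intpow (- (int (Suc j) * b (Suc k)))))"
proof -
  define F where "F j k = (fls_X_intpow (int j * b k) - fls_X_intpow (- (int j * b k)) :: rat fls)" for j k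
  have trm: "Phi (of_int (wsignB n (sg,s)) * fls_X_intpow (ps_exp n (\<lambda>j. wactB (sg,s) (\<lambda>k. lam k + rhoB n k) j - rhoB n j)))
     = of_int (sign sg) * fls_X_intpow (- RR n) * (\<Prod>j\<in>{1..n}. of_int (s j) * fls_X_intpow (int j * s j * b (inv_into UNIV sg j)))"
    if sg: "sg permutes {1..n}" and s: "s \<in> SG n" for sg s
  proof -
    have "Phi (fls_X_intpow (ps_exp n (\<lambda>j. wactB (sg,s) (\<lambda>k. lam k + rhoB n k) j - rhoB n j))) =
       fls_X_intpow (2 * ps_exp n (\<lambda>j. wactB (sg,s) (\<lambda>k. lam k + rhoB n k) j - rhoB n j))" by (rule Phi_XI)
    also have "\<dots> = fls_X_intpow (- RR n + (\<Sum>j\<in>{1..n}. int j * s j * b (inv_into UNIV sg j)))"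
      using ps_exp_val[OF lamL sg s] by (simp add: b_def)
    also have "\<dots> = fls_X_intpow (- RR n) * (\<Prod>j\<in>{1..n}. fls_X_intpow (int j * s j * b (inv_into UNIV sg j)))"
      by (simp only: XI_sum[symmetric] fls_X_intpow_times_fls_X_intpow)
    finally have 1: "Phi (fls_X_intpow (ps_exp n (\<lambda>j. wactB (sg,s) (\<lambda>k. lam k + rhoB n k) j - rhoB n j))) =
       fls_X_intpow (- RR n) * (\<Prod>j\<in>{1..n}. fls_X_intpow (int j * s j * b (inv_into UNIV sg j)))" .
    have 2: "Phi (of_int (wsignB n (sg,s))) = of_int (sign sg) * (\<Prod>j\<in>{1..n}. of_int (s j))"
      by (simp only: wsignB_def fst_conv snd_conv Phi_of_int) (simp add: of_int_prod)
    show ?thesis by (simp add: Phi_mult 1 2 prod.distrib mult_ac)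
  qed
  have "Phi (weyl_numB n lam) = (\<Sum>w\<in>weylB n. Phi (of_int (wsignB n w) *
      fls_X_intpow (ps_exp n (\<lambda>j. wactB w (\<lambda>k. lam k + rhoB n k) j - rhoB n j))))"
    unfolding weyl_numB_def by (rule Phi_sum)
  also have "\<dots> = (\<Sum>sg\<in>{sg. sg permutes {1..n}}. \<Sum>s\<in>SG n. Phi (of_int (wsignB n (sg,s)) *
      fls_X_intpow (ps_exp n (\<lambda>j. wactB (sg,s) (\<lambda>k. lam k + rhoB n k) j - rhoB n j))))"
    by (simp add: weylB_eq sum.cartesian_product)
  also have "\<dots> = (\<Sum>sg\<in>{sg. sg permutes {1..n}}. \<Sum>s\<in>SG n. of_int (sign sg) * fls_X_intpow (- RR n) *
      (\<Prod>j\<in>{1..n}. of_int (s j) * fls_X_intpow (int j * s j * b (inv_into UNIV sg j))))"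
    by (intro sum.cong refl) (simp add: trm)
  also have "\<dots> = (\<Sum>sg\<in>{sg. sg permutes {1..n}}. of_int (sign sg) * fls_X_intpow (- RR n) *
      (\<Prod>j\<in>{1..n}. F j (inv_into UNIV sg j)))"
  proof (intro sum.cong refl)
    fix sg
    have "(\<Sum>s\<in>SG n. \<Prod>j\<in>{1..n}. of_int (s j) * fls_X_intpow (int j * s j * b (inv_into UNIV sg j))) =
       (\<Prod>j\<in>{1..n}. (of_int 1 * fls_X_intpow (int j * 1 * b (inv_into UNIV sg j))) +
                        (of_int (-1) * fls_X_intpow (int j * (-1) * b (inv_into UNIV sg j))) :: rat fls)"
      by (rule sum_SG[where g="\<lambda>j e. of_int e * fls_X_intpow (int j * e * b (inv_into UNIV sg j))"])
    also have "\<dots> = (\<Prod>j\<in>{1..n}. F j (inv_into UNIV sg j))"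
      by (simp add: F_def)
    finally show "(\<Sum>s\<in>SG n. of_int (sign sg) * fls_X_intpow (- RR n) *
      (\<Prod>j\<in>{1..n}. of_int (s j) * fls_X_intpow (int j * s j * b (inv_into UNIV sg j)))) =
      of_int (sign sg) * fls_X_intpow (- RR n) * (\<Prod>j\<in>{1..n}. F j (inv_into UNIV sg j))"
      by (simp add: sum_distrib_left[symmetric])
  qed
  also have "\<dots> = fls_X_intpow (- RR n) * (\<Sum>sg\<in>{sg. sg permutes {1..n}}. of_int (sign (inv_into UNIV sg)) *
      (\<Prod>j\<in>{1..n}. F j (inv_into UNIV sg j)))"
  proof -
    have si: "sign (inv_into UNIV sg) = sign sg" if "sg permutes {1..n}" for sg
      by (rule sign_inverse[OF permutes_imp_permutation[OF _ that]]) simp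
    show ?thesis
      by (subst sum_distrib_left) (rule sum.cong[OF refl], auto simp: si mult_ac)
  qed
  also have "(\<Sum>sg\<in>{sg. sg permutes {1..n}}. of_int (sign (inv_into UNIV sg)) *
      (\<Prod>j\<in>{1..n}. F j (inv_into UNIV sg j))) =
      (\<Sum>sg\<in>{sg. sg permutes {1..n}}. of_int (sign sg) * (\<Prod>j\<in>{1..n}. F j (sg j)))"
    by (rule sum_perm_inv[symmetric]) simp
  also have "\<dots> = (\<Sum>p\<in>{p. p permutes {0..<n}}. of_int (sign p) * (\<Prod>j\<in>{0..<n}. F (Suc j) (Suc (p j))))"
    by (rule perm_shift)
  also have "\<dots> = det (mat n n (\<lambda>(j,k). F (Suc j) (Suc k)))"
  proof (subst det_def'[of _ n])
    show "mat n n (\<lambda>(j,k). F (Suc j) (Suc k)) \<in> carrier_mat n n" by simp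
    show "(\<Sum>p\<in>{p. p permutes {0..<n}}. of_int (sign p) * (\<Prod>j\<in>{0..<n}. F (Suc j) (Suc (p j)))) =
      (\<Sum>p\<in>{p. p permutes {0..<n}}. signof p * (\<Prod>i = 0..<n. mat n n (\<lambda>(j,k). F (Suc j) (Suc k)) $$ (i, p i)))"
      by (intro sum.cong refl prod.cong) (auto simp: permutes_in_image)
  qed
  finally show ?thesis by (simp add: F_def)
qed

definition CC :: "int \<Rightarrow> rat fls" where "CC a = fls_X_intpow a + fls_X_intpow (- a)"

definition AP :: "(nat \<Rightarrow> int) \<Rightarrow> nat \<Rightarrow> rat fls" where
  "AP g N = (\<Prod>k<N. fls_X_intpow (g k) - fls_X_intpow (- g k)) * (\<Prod>l<N. \<Prod>k<l. CC (g l) - CC (g k))"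

lemma det_AP:
  "det (mat n n (\<lambda>(j,k). fls_X_intpow (int (Suc j) * g k) - fls_X_intpow (- (int (Suc j) * g k)))) = AP g n"
proof -
  define x where "x k = (fls_X_intpow (g k) :: rat fls)" for k
  have M: "mat n n (\<lambda>(j,k). fls_X_intpow (int (Suc j) * g k) - fls_X_intpow (- (int (Suc j) * g k))) \<in> carrier_mat n n"
    by simp
  have "det (mat n n (\<lambda>(j,k). fls_X_intpow (int (Suc j) * g k) - fls_X_intpow (- (int (Suc j) * g k)))) =
     det (transpose_mat (mat n n (\<lambda>(j,k). fls_X_intpow (int (Suc j) * g k) - fls_X_intpow (- (int (Suc j) * g k)))))"
    by (rule det_transpose[OF M, symmetric])
  also have "transpose_mat (mat n n (\<lambda>(j,k). fls_X_intpow (int (Suc j) * g k) - fls_X_intpow (- (int (Suc j) * g k)))) =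
     mat n n (\<lambda>(k,m). x k ^ Suc m - inverse (x k) ^ Suc m)"
  proof (rule eq_matI)
    fix i j assume "i < dim_row (mat n n (\<lambda>(k,m). x k ^ Suc m - inverse (x k) ^ Suc m))"
      "j < dim_col (mat n n (\<lambda>(k,m). x k ^ Suc m - inverse (x k) ^ Suc m))"
    hence ij: "i < n" "j < n" by auto
    have 1: "x i ^ Suc j = fls_X_intpow (int (Suc j) * g i)" by (simp only: x_def fls_X_intpow_power)
    have 2: "inverse (x i) ^ Suc j = fls_X_intpow (- (int (Suc j) * g i))"
      by (simp only: x_def fls_inverse_X_intpow fls_X_intpow_power mult_minus_right)
    show "transpose_mat (mat n n (\<lambda>(j,k). fls_X_intpow (int (Suc j) * g k) - fls_X_intpow (- (int (Suc j) * g k)))) $$ (i, j) =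
        mat n n (\<lambda>(k,m). x k ^ Suc m - inverse (x k) ^ Suc m) $$ (i, j)"
      using ij by (simp only: index_transpose_mat index_mat dim_row_mat dim_col_mat split 1 2)
  qed auto
  also have "det (mat n n (\<lambda>(k,m). x k ^ Suc m - inverse (x k) ^ Suc m)) = (\<Prod>k<n. x k - inverse (x k)) * (\<Prod>l<n. \<Prod>k<l. (x l + inverse (x l)) - (x k + inverse (x k)))"
    by (rule alt_prod) (simp add: x_def)
  also have "\<dots> = AP g n" by (simp add: AP_def CC_def x_def fls_inverse_X_intpow)
  finally show ?thesis .
qed

definition skip :: "nat \<Rightarrow> nat \<Rightarrow> nat" where "skip r k = (if k < r then k else Suc k)"

lemma prod_remove1:
  fixes h :: "nat \<Rightarrow> 'a::comm_monoid_mult"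
  assumes "r \<le> n"
  shows "(\<Prod>k<Suc n. h k) = h r * (\<Prod>k<n. h (skip r k))"
proof -
  have im: "{..<Suc n} = insert r (skip r ` {..<n})"
  proof (rule Set.set_eqI)
    fix x show "x \<in> {..<Suc n} \<longleftrightarrow> x \<in> insert r (skip r ` {..<n})"
    proof
      assume x: "x \<in> {..<Suc n}"
      show "x \<in> insert r (skip r ` {..<n})"
      proof (cases "x = r")
        case False
        hence "x = skip r (if x < r then x else x - 1)" "(if x < r then x else x - 1) < n"
          using x assms by (auto simp: skip_def)
        thus ?thesis by blast
      qed simp
    qed (use assms in \<open>auto simp: skip_def\<close>)
  qed
  have inj: "inj_on (skip r) {..<n}" by (auto simp: inj_on_def skip_def split: if_splits)
  have nr: "r \<notin> skip r ` {..<n}" by (auto simp: skip_def)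
  show ?thesis unfolding im by (simp add: prod.insert nr prod.reindex[OF inj])
qed

lemma prod_remove2:
  fixes g :: "nat \<Rightarrow> nat \<Rightarrow> 'a::comm_monoid_mult"
  assumes "r \<le> n"
  shows "(\<Prod>l<Suc n. \<Prod>k<l. g l k) =
    (\<Prod>k<r. g r k) * (\<Prod>l\<in>{r<..n}. g l r) * (\<Prod>l<n. \<Prod>k<l. g (skip r l) (skip r k))"
  using assms
proof (induction n arbitrary: r)
  case 0
  then show ?case by simp
next
  case (Suc n)
  have split: "(\<Prod>l<Suc (Suc n). \<Prod>k<l. g l k) = (\<Prod>l<Suc n. \<Prod>k<l. g l k) * (\<Prod>k<Suc n. g (Suc n) k)"
    by simp
  show ?case
  proof (cases "r \<le> n")
    case True
    have sk: "skip r n = Suc n" using True by (simp add: skip_def)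
    have iv: "{r<..Suc n} = insert (Suc n) {r<..n}" using True by auto
    have "(\<Prod>l<Suc (Suc n). \<Prod>k<l. g l k) =
       ((\<Prod>k<r. g r k) * (\<Prod>l\<in>{r<..n}. g l r) * (\<Prod>l<n. \<Prod>k<l. g (skip r l) (skip r k))) *
       (g (Suc n) r * (\<Prod>k<n. g (Suc n) (skip r k)))"
      unfolding split Suc.IH[OF True] prod_remove1[OF True] ..
    also have "\<dots> = (\<Prod>k<r. g r k) * ((\<Prod>l\<in>{r<..n}. g l r) * g (Suc n) r) *
        ((\<Prod>l<n. \<Prod>k<l. g (skip r l) (skip r k)) * (\<Prod>k<n. g (skip r n) (skip r k)))"
      unfolding sk by (simp only: mult_ac)
    also have "\<dots> = (\<Prod>k<r. g r k) * (\<Prod>l\<in>{r<..Suc n}. g l r) * (\<Prod>l<Suc n. \<Prod>k<l. g (skip r l) (skip r k))"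
    proof -
      have p1: "(\<Prod>l\<in>{r<..Suc n}. g l r) = g (Suc n) r * (\<Prod>l\<in>{r<..n}. g l r)"
        unfolding iv by (rule prod.insert) auto
      have p2: "(\<Prod>l<Suc n. \<Prod>k<l. g (skip r l) (skip r k)) =
          (\<Prod>l<n. \<Prod>k<l. g (skip r l) (skip r k)) * (\<Prod>k<n. g (skip r n) (skip r k))"
        by (rule prod.lessThan_Suc)
      show ?thesis unfolding p1 p2 by (simp only: mult_ac)
    qed
    finally show ?thesis .
  next
    case False
    hence r: "r = Suc n" using Suc.prems by simp
    have "(\<Prod>l<Suc n. \<Prod>k<l. g (skip r l) (skip r k)) = (\<Prod>l<Suc n. \<Prod>k<l. g l k)"
      by (intro prod.cong refl) (auto simp: skip_def r)
    then show ?thesis unfolding split r by (simp add: mult_ac)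
  qed
qed

definition Tg :: "(nat \<Rightarrow> int) \<Rightarrow> nat \<Rightarrow> nat \<Rightarrow> rat fls" where
  "Tg g r n = (fls_X_intpow (g r) - fls_X_intpow (- g r)) * (\<Prod>k<r. CC (g r) - CC (g k)) *
      (\<Prod>l\<in>{r<..n}. CC (g l) - CC (g r))"

lemma AP_remove:
  assumes "r \<le> n"
  shows "AP g (Suc n) = AP (\<lambda>k. g (skip r k)) n * Tg g r n"
  unfolding AP_def Tg_def prod_remove1[OF assms, of "\<lambda>k. fls_X_intpow (g k) - fls_X_intpow (- g k)"]
    prod_remove2[OF assms, of "\<lambda>l k. CC (g l) - CC (g k)"]
  by (simp only: mult_ac)

definition XP :: "int \<Rightarrow> rat fls" where "XP i = fls_X_intpow i"

lemma XP_mult: "XP i * XP j = XP (i + j)" unfolding XP_def by (rule fls_X_intpow_times_fls_X_intpow)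
lemma XP_0: "XP 0 = 1" unfolding XP_def by simp
lemma XP_nz: "XP i \<noteq> 0" unfolding XP_def by simp
lemma XP_nth: "fls_nth (XP i) k = (if k = i then 1 else 0)" unfolding XP_def by simp
lemma XP_eq_1: "XP m = 1 \<longleftrightarrow> m = 0"
proof
  assume "XP m = 1"
  hence "fls_nth (XP m) m = fls_nth 1 m" by simp
  thus "m = 0" by (simp add: XP_nth split: if_splits)
qed (simp add: XP_0)
lemma Phi_XP: "Phi (XP e) = XP (2 * e)" unfolding XP_def by (rule Phi_XI)
lemma XP_sum: "XP (sum f A) = (\<Prod>a\<in>A. XP (f a))" unfolding XP_def by (rule XI_sum)
lemma fls_X_pow_XP: "fls_X ^ m = XP (int m)" unfolding XP_def by (simp add: fls_X_power_conv_shift_1)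

lemma F1: "XP a - XP (- a) = XP (- a) * (XP (2 * a) - 1)"
  by (simp add: right_diff_distrib XP_mult)

lemma F2: "CC a - CC b = - (XP (- b) * ((XP (b - a) - 1) * (XP (a + b) - 1)))"
proof -
  have "XP (- b) * ((XP (b - a) - 1) * (XP (a + b) - 1)) =
      XP (- b) * (XP (b - a) * XP (a + b)) - XP (- b) * XP (b - a) - XP (- b) * XP (a + b) + XP (- b)"
    by (simp add: algebra_simps)
  also have "\<dots> = XP b - XP (- a) - XP a + XP (- b)"
    by (simp add: XP_mult)
  moreover have "CC c = XP c + XP (- c)" for c by (simp add: CC_def XP_def)
  ultimately show ?thesis by (simp add: algebra_simps)
qed

lemma F1_nz: "a \<noteq> 0 \<Longrightarrow> XP a - XP (- a) \<noteq> 0"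
  by (simp add: F1 XP_nz XP_eq_1)

lemma F2_nz: "a \<noteq> b \<Longrightarrow> a + b \<noteq> 0 \<Longrightarrow> CC a - CC b \<noteq> 0"
  by (simp add: F2 XP_nz XP_eq_1)

definition Yn :: "nat \<Rightarrow> rat fls" where "Yn d = XP (2 * int d) - 1"
definition psi :: "nat \<Rightarrow> rat fls" where "psi m = (\<Prod>d\<in>{1..m}. Yn d)"
definition psq :: "nat \<Rightarrow> rat fls" where "psq m = (\<Prod>d\<in>{1..m}. XP (int d) - 1)"

lemma Yn_nz: "d \<ge> 1 \<Longrightarrow> Yn d \<noteq> 0" by (simp add: Yn_def XP_eq_1)
lemma psi_nz: "psi m \<noteq> 0" by (auto simp: psi_def Yn_nz)
lemma psq_nz: "psq m \<noteq> 0" by (auto simp: psq_def XP_eq_1)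
lemma Phi_psq: "Phi (psq m) = psi m"
  by (simp add: psq_def psi_def Yn_def Phi_prod Phi_diff Phi_XP Phi_1)

lemma psq_Suc: "psq (Suc m) = psq m * (XP (int (Suc m)) - 1)"
  by (simp add: psq_def)

lemma qbinom_0: "b > a \<Longrightarrow> qbinom a b = 0"
proof (induction a arbitrary: b)
  case 0 then show ?case by (cases b) auto
next
  case (Suc a) then show ?case by (cases b) auto
qed

lemma qbinom_prod: "b \<le> a \<Longrightarrow> qbinom a b * psq b * psq (a - b) = psq a"
proof (induction a arbitrary: b)
  case 0 then show ?case by (simp add: psq_def)
next
  case (Suc a)
  show ?case
  proof (cases b)
    case 0 then show ?thesis by (simp add: psq_def)
  next
    case (Suc b')
    with Suc.prems have b': "b' \<le> a" by simp
    have t1: "qbinom a b' * psq (Suc b') * psq (a - b') = psq a * (XP (int (Suc b')) - 1)"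
      using Suc.IH[OF b'] by (simp add: psq_Suc mult_ac)
    have t2: "fls_X ^ Suc b' * qbinom a (Suc b') * psq (Suc b') * psq (a - b') =
        XP (int (Suc b')) * psq a * (XP (int (a - b')) - 1)"
    proof (cases "b' = a")
      case True then show ?thesis by (simp add: qbinom_0 XP_0)
    next
      case False
      hence le: "Suc b' \<le> a" using b' by simp
      have ab: "a - b' = Suc (a - Suc b')" using le by simp
      have "qbinom a (Suc b') * psq (Suc b') * psq (a - Suc b') = psq a" by (rule Suc.IH[OF le])
      then show ?thesis unfolding ab psq_Suc fls_X_pow_XP
        by (simp add: mult_ac ab[symmetric])
    qed
    have "qbinom (Suc a) b * psq b * psq (Suc a - b) =
        qbinom a b' * psq (Suc b') * psq (a - b') + fls_X ^ Suc b' * qbinom a (Suc b') * psq (Suc b') * psq (a - b')"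
      by (simp add: Suc algebra_simps)
    also have "\<dots> = psq a * ((XP (int (Suc b')) - 1) + XP (int (Suc b')) * (XP (int (a - b')) - 1))"
      unfolding t1 t2 by (simp add: algebra_simps)
    also have "\<dots> = psq a * (XP (int (Suc a)) - 1)"
      using b' by (simp add: algebra_simps XP_mult)
    also have "\<dots> = psq (Suc a)" by (simp add: psq_Suc)
    finally show ?thesis .
  qed
qed

lemma qbinom_coeffs: "(\<forall>k<0. fls_nth (qbinom a b) k = 0) \<and> fls_nth (qbinom a b) 0 = (if b \<le> a then 1 else 0)"
proof (induction a b rule: qbinom.induct)
  case (3 a b)
  have sh: "fls_nth (fls_X ^ Suc b * f) k = fls_nth f (k - int (Suc b))" for f :: "rat fls" and k
  proof -
    have "fls_X ^ Suc b * f = fls_shift (- int (Suc b)) f"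
      by (simp only: fls_X_power_conv_shift_1 fls_X_intpow_times_conv_shift(1))
    hence "fls_nth (fls_X ^ Suc b * f) k = fls_nth f (k + - int (Suc b))" by simp
    also have "k + - int (Suc b) = k - int (Suc b)" by simp
    finally show ?thesis .
  qed
  have e: "fls_nth (qbinom (Suc a) (Suc b)) k = fls_nth (qbinom a b) k + fls_nth (qbinom a (Suc b)) (k - int (Suc b))" for k
    by (simp only: qbinom.simps(3) fls_plus_nth sh)
  show ?case using 3 by (auto simp: e simp del: qbinom.simps)
qed auto

lemma qbinom_subdeg: "b \<le> a \<Longrightarrow> fls_subdegree (qbinom a b) = 0 \<and> qbinom a b \<noteq> 0"
proof -
  assume ba: "b \<le> a"
  have c0: "fls_nth (qbinom a b) 0 = 1" using qbinom_coeffs[of a b] ba by simp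
  have "fls_subdegree (qbinom a b) = 0"
    by (rule fls_subdegree_eqI) (use c0 qbinom_coeffs[of a b] in auto)
  moreover have "qbinom a b \<noteq> 0" using c0 by auto
  ultimately show ?thesis by simp
qed

definition bet :: "nat \<Rightarrow> nat \<Rightarrow> int" where "bet n r = 2 * int n + 1 - 2 * int r"

lemma prod_neg2:
  assumes "finite A"
  shows "(\<Prod>x\<in>A. - (f x * g x :: 'a::comm_ring_1)) = (-1) ^ card A * prod f A * prod g A"
  using assms by (induction A rule: finite_induct) (auto simp: mult_ac)

lemma RA: "(\<Prod>k<r. Yn (r - k)) = psi r"
  unfolding psi_def by (rule prod.reindex_bij_witness[where i="\<lambda>d. r - d" and j="\<lambda>k. r - k"]) auto

lemma RB: "(\<Prod>l\<in>{r<..n}. Yn (l - r)) = psi (n - r)"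
  unfolding psi_def by (rule prod.reindex_bij_witness[where i="\<lambda>d. d + r" and j="\<lambda>l. l - r"]) auto

lemma RC: "r \<le> n \<Longrightarrow> (\<Prod>k<r. Yn (2*n+1-r-k)) = (\<Prod>d\<in>{Suc (2*n+1-2*r)..2*n+1-r}. Yn d)"
  by (rule prod.reindex_bij_witness[where i="\<lambda>d. 2*n+1-r-d" and j="\<lambda>k. 2*n+1-r-k"]) auto

lemma RD: "r \<le> n \<Longrightarrow> (\<Prod>l\<in>{r<..n}. Yn (2*n+1-r-l)) = (\<Prod>d\<in>{Suc (n-r)..2*n-2*r}. Yn d)"
  by (rule prod.reindex_bij_witness[where i="\<lambda>d. 2*n+1-r-d" and j="\<lambda>l. 2*n+1-r-l"]) auto

lemma psi_split: "a \<le> b \<Longrightarrow> psi b = psi a * (\<Prod>d\<in>{Suc a..b}. Yn d)"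
proof -
  assume ab: "a \<le> b"
  have "{1..b} = {1..a} \<union> {Suc a..b}" using ab by auto
  thus ?thesis unfolding psi_def by (simp add: prod.union_disjoint[symmetric] ivl_disj_int)
qed

lemma psi_Suc: "psi (Suc m) = psi m * Yn (Suc m)" by (simp add: psi_def)

lemma psi_combine:
  assumes "r \<le> n"
  shows "Yn (2*n+1-2*r) * (\<Prod>d\<in>{Suc (2*n+1-2*r)..2*n+1-r}. Yn d) * psi (n - r) *
         (\<Prod>d\<in>{Suc (n-r)..2*n-2*r}. Yn d) = psi (2*n+1-r)"
proof -
  have 1: "psi (2*n+1-r) = psi (2*n+1-2*r) * (\<Prod>d\<in>{Suc (2*n+1-2*r)..2*n+1-r}. Yn d)"
    by (rule psi_split) simp
  have 2: "psi (2*n+1-2*r) = psi (2*n-2*r) * Yn (2*n+1-2*r)"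
    using psi_Suc[of "2*n-2*r"] assms by (simp add: Suc_diff_le)
  have 3: "psi (2*n-2*r) = psi (n-r) * (\<Prod>d\<in>{Suc (n-r)..2*n-2*r}. Yn d)"
    by (rule psi_split) simp
  show ?thesis unfolding 1 2 3 by (simp only: mult_ac)
qed

definition EE :: "nat \<Rightarrow> nat \<Rightarrow> int" where
  "EE n r = bet n r * (int n - int r + 1) + (\<Sum>k<r. bet n k)"

lemma T_closed:
  assumes rn: "r \<le> n"
  shows "Tg (bet n) r n = (-1) ^ n * XP (- EE n r) * (psi r * psi (2*n+1-r))"
proof -
  have a: "XP (bet n r) - XP (- bet n r) = XP (- bet n r) * Yn (2*n+1-2*r)"
  proof -
    have "2 * bet n r = 2 * int (2*n+1-2*r)" using rn by (simp add: bet_def of_nat_diff)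
    thus ?thesis by (simp add: F1 Yn_def)
  qed
  have b: "CC (bet n r) - CC (bet n k) = - (XP (- bet n k) * (Yn (r - k) * Yn (2*n+1-r-k)))"
    if k: "k \<in> {..<r}" for k
  proof -
    have "bet n k - bet n r = 2 * int (r - k)" "bet n r + bet n k = 2 * int (2*n+1-r-k)"
      using k rn by (auto simp: bet_def of_nat_diff)
    thus ?thesis by (simp add: F2 Yn_def)
  qed
  have c: "CC (bet n l) - CC (bet n r) = - (XP (- bet n r) * (Yn (l - r) * Yn (2*n+1-r-l)))"
    if l: "l \<in> {r<..n}" for l
  proof -
    have "bet n r - bet n l = 2 * int (l - r)" "bet n l + bet n r = 2 * int (2*n+1-r-l)"
      using l rn by (auto simp: bet_def of_nat_diff)
    thus ?thesis by (simp add: F2 Yn_def)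
  qed
  have pb: "(\<Prod>k<r. CC (bet n r) - CC (bet n k)) =
      (-1) ^ r * XP (- (\<Sum>k<r. bet n k)) * ((\<Prod>k<r. Yn (r - k)) * (\<Prod>k<r. Yn (2*n+1-r-k)))"
  proof -
    have "(\<Prod>k<r. CC (bet n r) - CC (bet n k)) = (\<Prod>k<r. - (XP (- bet n k) * (Yn (r - k) * Yn (2*n+1-r-k))))"
      by (rule prod.cong[OF refl]) (rule b)
    also have "\<dots> = (-1) ^ r * (\<Prod>k<r. XP (- bet n k)) * (\<Prod>k<r. Yn (r - k) * Yn (2*n+1-r-k))"
      by (subst prod_neg2) auto
    also have "(\<Prod>k<r. XP (- bet n k)) = XP (- (\<Sum>k<r. bet n k))"
      by (simp add: XP_sum sum_negf[symmetric])
    finally show ?thesis by (simp add: prod.distrib)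
  qed
  have pc: "(\<Prod>l\<in>{r<..n}. CC (bet n l) - CC (bet n r)) =
      (-1) ^ (n - r) * XP (- (int (n - r) * bet n r)) * ((\<Prod>l\<in>{r<..n}. Yn (l - r)) * (\<Prod>l\<in>{r<..n}. Yn (2*n+1-r-l)))"
  proof -
    have "(\<Prod>l\<in>{r<..n}. CC (bet n l) - CC (bet n r)) = (\<Prod>l\<in>{r<..n}. - (XP (- bet n r) * (Yn (l - r) * Yn (2*n+1-r-l))))"
      by (rule prod.cong[OF refl]) (rule c)
    also have "\<dots> = (-1) ^ (n - r) * (\<Prod>l\<in>{r<..n}. XP (- bet n r)) * (\<Prod>l\<in>{r<..n}. Yn (l - r) * Yn (2*n+1-r-l))"
      by (subst prod_neg2) auto
    also have "(\<Prod>l\<in>{r<..n}. XP (- bet n r)) = XP (- (int (n - r) * bet n r))"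
      using XP_sum[of "\<lambda>_. - bet n r" "{r<..n}"] by simp
    finally show ?thesis by (simp add: prod.distrib)
  qed
  have "Tg (bet n) r n = (XP (bet n r) - XP (- bet n r)) * (\<Prod>k<r. CC (bet n r) - CC (bet n k)) *
      (\<Prod>l\<in>{r<..n}. CC (bet n l) - CC (bet n r))"
    by (simp add: Tg_def XP_def)
  also have "\<dots> = ((-1) ^ r * (-1) ^ (n - r)) * (XP (- bet n r) * XP (- (\<Sum>k<r. bet n k)) * XP (- (int (n - r) * bet n r))) *
      ((\<Prod>k<r. Yn (r - k)) * (Yn (2*n+1-2*r) * (\<Prod>k<r. Yn (2*n+1-r-k)) * (\<Prod>l\<in>{r<..n}. Yn (l - r)) * (\<Prod>l\<in>{r<..n}. Yn (2*n+1-r-l))))"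
    unfolding a pb pc by (simp only: mult_ac)
  also have "(-1) ^ r * (-1) ^ (n - r) = ((-1) ^ n :: rat fls)"
    using rn by (simp add: power_add[symmetric])
  also have "XP (- bet n r) * XP (- (\<Sum>k<r. bet n k)) * XP (- (int (n - r) * bet n r)) = XP (- EE n r)"
    using rn by (simp add: XP_mult EE_def of_nat_diff algebra_simps)
  also have "Yn (2*n+1-2*r) * (\<Prod>k<r. Yn (2*n+1-r-k)) * (\<Prod>l\<in>{r<..n}. Yn (l - r)) * (\<Prod>l\<in>{r<..n}. Yn (2*n+1-r-l)) =
      psi (2*n+1-r)"
    unfolding RC[OF rn] RB RD[OF rn] using psi_combine[OF rn] by (simp only: mult_ac)
  finally show ?thesis unfolding RA by (simp only: mult_ac)
qed

lemma AP_nz: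
  assumes "\<And>k. k < N \<Longrightarrow> g k > 0" and "\<And>k l. k < l \<Longrightarrow> l < N \<Longrightarrow> g k \<noteq> g l"
  shows "AP g N \<noteq> 0"
proof -
  have h: "\<forall>k\<in>{..<N}. fls_X_intpow (g k) - fls_X_intpow (- g k) \<noteq> (0 :: rat fls)"
  proof
    fix k assume "k \<in> {..<N}"
    hence "g k \<noteq> 0" using assms(1) by force
    thus "fls_X_intpow (g k) - fls_X_intpow (- g k) \<noteq> (0 :: rat fls)" using F1_nz[of "g k", unfolded XP_def] by blast
  qed
  have 1: "(\<Prod>k<N. fls_X_intpow (g k) - fls_X_intpow (- g k)) \<noteq> (0 :: rat fls)"
  proof
    assume "(\<Prod>k<N. fls_X_intpow (g k) - fls_X_intpow (- g k)) = (0 :: rat fls)"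
    then obtain k where "k \<in> {..<N}" "fls_X_intpow (g k) - fls_X_intpow (- g k) = (0 :: rat fls)"
      using prod_zero_iff[of "{..<N}" "\<lambda>k. fls_X_intpow (g k) - fls_X_intpow (- g k) :: rat fls"] by blast
    with h show False by blast
  qed
  have 2: "(\<Prod>l<N. \<Prod>k<l. CC (g l) - CC (g k)) \<noteq> 0"
  proof -
    have "CC (g l) - CC (g k) \<noteq> 0" if "k < l" "l < N" for k l
      using F2_nz[of "g l" "g k"] assms(1)[of k] assms(1)[of l] assms(2)[OF that] that by auto
    thus ?thesis by (auto simp: prod_zero_iff)
  qed
  show ?thesis using 1 2 by (simp add: AP_def)
qed

lemma gauss2: "2 * (\<Sum>k<i. int k) = int i * (int i - 1)"
  by (induction i) (auto simp: algebra_simps)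

lemma sum_bet: "(\<Sum>k<i. bet n k) = int i * (2 * int n + 1) - 2 * (\<Sum>k<i. int k)"
  by (simp add: bet_def sum_subtractf sum_distrib_left)

lemma EE_diff: "EE n i - EE n 0 = 2 * ((\<Sum>k<i. int k) - int i * int n)"
proof -
  have g: "2 * (\<Sum>k<i. int k) = int i * (int i - 1)" by (rule gauss2)
  show ?thesis unfolding EE_def sum_bet using g by (simp add: bet_def algebra_simps)
qed

lemma Phi_N:
  fixes L :: "nat \<Rightarrow> int" and lam :: "nat \<Rightarrow> rat"
  assumes lamL: "\<And>k. k \<in> {1..n} \<Longrightarrow> lam k = of_int (L k)"
  shows "Phi (weyl_numB n lam) = fls_X_intpow (- RR n) * AP (\<lambda>k. 2 * L (Suc k) + 2 * int n - 2 * int (Suc k) + 1) n"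
  using weyl_to_det[OF lamL] det_AP[of n "\<lambda>k. 2 * L (Suc k) + 2 * int n - 2 * int (Suc k) + 1"] by simp

theorem main_identity:
  fixes n i :: nat
  assumes "1 \<le> i" and "i \<le> n"
  shows "ps_tildeB n (omega_tildeB i) = qbinom (2 * n + 1) i"
proof -
  define Lw :: "nat \<Rightarrow> int" where "Lw k = (if k \<le> i then 1 else 0)" for k
  define N1 where "N1 = weyl_numB n (omega_tildeB i)"
  define N0 where "N0 = weyl_numB n (\<lambda>_. 0)"
  define qb where "qb = qbinom (2 * n + 1) i"
  define e where "e = (\<Sum>k<i. int k) - int i * int n"
  have g1: "(\<lambda>k. 2 * Lw (Suc k) + 2 * int n - 2 * int (Suc k) + 1) = (\<lambda>k. bet n (skip i k))"
    by (rule ext) (auto simp: Lw_def bet_def skip_def)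
  have g0: "(\<lambda>k. 2 * (0::int) + 2 * int n - 2 * int (Suc k) + 1) = (\<lambda>k. bet n (skip 0 k))"
    by (rule ext) (auto simp: bet_def skip_def)
  have P1: "Phi N1 = fls_X_intpow (- RR n) * AP (\<lambda>k. bet n (skip i k)) n"
    unfolding N1_def using Phi_N[of n "omega_tildeB i" Lw] g1 by (simp add: omega_tildeB_def Lw_def)
  have P0: "Phi N0 = fls_X_intpow (- RR n) * AP (\<lambda>k. bet n (skip 0 k)) n"
    unfolding N0_def using Phi_N[of n "\<lambda>_. 0" "\<lambda>_. 0"] g0 by simp
  have eq: "Phi N1 * Tg (bet n) i n = Phi N0 * Tg (bet n) 0 n"
    unfolding P1 P0 using AP_remove[OF assms(2), of "bet n"] AP_remove[of 0 n "bet n"] by (simp add: mult_ac)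
  have N0nz: "N0 \<noteq> 0"
  proof
    assume "N0 = 0"
    hence "Phi N0 = 0" by (simp add: Phi_0)
    moreover have "AP (\<lambda>k. bet n (skip 0 k)) n \<noteq> 0"
      by (rule AP_nz) (auto simp: bet_def skip_def)
    ultimately show False using P0 XP_nz[of "- RR n", unfolded XP_def] by simp
  qed
  have qbp: "Phi qb * (psi i * psi (2 * n + 1 - i)) = psi (2 * n + 1)"
  proof -
    have "qb * psq i * psq (2 * n + 1 - i) = psq (2 * n + 1)" unfolding qb_def
      by (rule qbinom_prod) (use assms in simp)
    hence "Phi (qb * psq i * psq (2 * n + 1 - i)) = Phi (psq (2 * n + 1))" by (rule arg_cong)
    thus ?thesis by (simp only: Phi_mult Phi_psq mult_ac)
  qed
  have Pnz: "psi i * psi (2 * n + 1 - i) \<noteq> 0" by (simp add: psi_nz)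
  have psi0: "psi 0 = 1" by (simp add: psi_def)
  define P where "P = psi i * psi (2 * n + 1 - i)"
  have A: "(-1) ^ n * P \<noteq> 0" using Pnz by (simp add: P_def)
  have H0: "Phi N1 * ((-1) ^ n * XP (- EE n i) * P) =
        Phi N0 * ((-1) ^ n * XP (- EE n 0) * (psi 0 * psi (2 * n + 1 - 0)))"
    using eq unfolding T_closed[OF assms(2)] T_closed[of 0 n, OF le0] P_def .
  have psq0: "psi 0 * psi (2 * n + 1 - 0) = Phi qb * P"
    using qbp psi0 by (simp add: P_def)
  from H0[unfolded psq0] have "((-1) ^ n * P) * (Phi N1 * XP (- EE n i)) =
       ((-1) ^ n * P) * (Phi N0 * XP (- EE n 0) * Phi qb)"
    by (simp only: mult_ac)
  hence H: "Phi N1 * XP (- EE n i) = Phi N0 * XP (- EE n 0) * Phi qb"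
    by (rule mult_left_cancel[OF A, THEN iffD1])
  have X1: "XP (- EE n i) * XP (EE n i) = 1" by (simp add: XP_mult XP_0)
  have X2: "XP (- EE n 0) * XP (EE n i) = Phi (XP e)"
    by (simp add: XP_mult EE_diff e_def Phi_XP)
  have "Phi N1 = Phi N1 * (XP (- EE n i) * XP (EE n i))" by (simp only: X1 mult_1_right)
  also have "\<dots> = (Phi N1 * XP (- EE n i)) * XP (EE n i)" by (simp only: mult.assoc)
  also have "\<dots> = (Phi N0 * XP (- EE n 0) * Phi qb) * XP (EE n i)" by (simp only: H)
  also have "\<dots> = Phi N0 * Phi qb * (XP (- EE n 0) * XP (EE n i))" by (simp only: mult_ac)
  also have "\<dots> = Phi N0 * Phi qb * Phi (XP e)" by (simp only: X2)
  also have "\<dots> = Phi (N0 * (XP e * qb))" by (simp only: Phi_mult mult_ac)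
  finally have "Phi N1 = Phi (N0 * (XP e * qb))" .
  hence N1eq: "N1 = N0 * (XP e * qb)" by (rule Phi_inj)
  have ps: "psB n (omega_tildeB i) = XP e * qb"
    unfolding psB_def N1_def[symmetric] N0_def[symmetric] N1eq using N0nz by simp
  have qbs: "fls_subdegree qb = 0" "qb \<noteq> 0" unfolding qb_def using qbinom_subdeg[of i "2 * n + 1"] assms by auto
  have sd: "fls_subdegree (XP e * qb) = e"
    unfolding XP_def using fls_subdegree_mult_fls_X_intpow(1)[OF qbs(2), of e] qbs(1) by simp
  have "ps_tildeB n (omega_tildeB i) = fls_shift (fls_subdegree (psB n (omega_tildeB i))) (psB n (omega_tildeB i))"
    by (simp only: ps_tildeB_def)
  also have "\<dots> = fls_shift e (XP e * qb)" by (simp only: ps sd)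
  also have "\<dots> = fls_shift e (fls_shift (- e) qb)"
  proof -
    have "XP e * qb = fls_shift (- e) qb" unfolding XP_def by (rule fls_X_intpow_times_conv_shift(1))
    thus ?thesis by (rule arg_cong)
  qed
  also have "\<dots> = qb" by (simp only: fls_shift_fls_shift add.left_inverse fls_shift_0)
  finally show ?thesis unfolding qb_def[symmetric] .
qed

theorem proposition5p26:
  fixes n i :: nat
  assumes "1 \<le> n" and "1 \<le> i" and "i \<le> n"
  shows "ps_tildeB n (omega_tildeB i) = qbinom (2 * n + 1) i"
  using main_identity[OF assms(2) assms(3)] .

end
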